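(* Let $F$ be a field of characteristic $0$, $d\ge1$, $k\le d^2$, and let $f(x_1,\dots,x_k)\in F\langle X\rangle^{\otimes n}$ be a tensor polynomial that is multilinear and antisymmetric in $x_1,\dots,x_k$. Define the tensor polynomial in $d^2$ variables $$\Phi(x_1,\dots,x_{d^2}):=Alt_{x_1,\dots,x_{d^2}}\big(f(x_1,\dots,x_k)\otimes x_{k+1}\otimes x_{k+2}\otimes\cdots\otimes x_{d^2}\big)\in F\langle X\rangle^{\otimes(n+d^2-k)}.$$ Then $f$ is not identically zero when evaluated on $d\times d$ matrices $M_d(F)$ if and only if $\Phi$ is not identically zero when evaluated on $M_d(F)$.
   Context: $F\langle X\rangle$ is the free associative algebra in $x_1,x_2,\dots$; tensor polynomials are evaluated on matrices via the algebra homomorphism induced by $x_i\mapsto A_i\in M_d(F)$. $Alt_{x_1,\dots,x_m}G:=\sum_{\sigma\in S_m}\epsilon_\sigma G(x_{\sigma(1)},\dots,x_{\sigma(m)})$. *)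

theory Defs
  imports "HOL-Analysis.Analysis"
begin

text \<open>A monomial of the free algebra F<X> in variables
  x_0, x_1, ... is a word (nat list). A (pure) monomial tensor in F<X>^{(x)n} is a
  list of n words. A tensor polynomial is a coefficient function on lists of words
  (with finite support); it lies in F<X>^{(x)n} if its support consists of lists of
  length n. Variable x_{i+1} of the paper is variable i here (0-indexed).\<close>

type_synonym 'a tpoly = "nat list list \<Rightarrow> 'a"

definition tsupp :: "'a::zero tpoly \<Rightarrow> nat list list set" where
  "tsupp f = {ws. f ws \<noteq> 0}"

definition is_tpoly :: "nat \<Rightarrow> 'a::zero tpoly \<Rightarrow> bool" where
  "is_tpoly n f \<longleftrightarrow> finite (tsupp f) \<and> (\<forall>ws\<in>tsupp f. length ws = n)"

definition vars_in :: "nat set \<Rightarrow> 'a::zero tpoly \<Rightarrow> bool" where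
  "vars_in V f \<longleftrightarrow> (\<forall>ws\<in>tsupp f. \<forall>w\<in>set ws. set w \<subseteq> V)"

definition multilinear_in :: "nat \<Rightarrow> 'a::zero tpoly \<Rightarrow> bool" where
  "multilinear_in k f \<longleftrightarrow> (\<forall>ws\<in>tsupp f. \<forall>i<k. count_list (concat ws) i = 1)"

text \<open>Substitution x_i \<mapsto> x_{\<sigma> i} for a bijection \<sigma>, i.e. G(x_{\<sigma>(0)},x_{\<sigma>(1)},...).
  The monomial tensor ws is sent to map (map \<sigma>) ws.\<close>
definition rename :: "(nat \<Rightarrow> nat) \<Rightarrow> 'a tpoly \<Rightarrow> 'a tpoly" where
  "rename \<sigma> f = (\<lambda>ws. f (map (map (inv \<sigma>)) ws))"

definition antisym_in :: "nat \<Rightarrow> 'a::comm_ring_1 tpoly \<Rightarrow> bool" where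
  "antisym_in k f \<longleftrightarrow>
     (\<forall>\<sigma>. \<sigma> permutes {..<k} \<longrightarrow> rename \<sigma> f = (\<lambda>ws. of_int (sign \<sigma>) * f ws))"

definition Alt :: "nat \<Rightarrow> 'a::comm_ring_1 tpoly \<Rightarrow> 'a tpoly" where
  "Alt m G = (\<lambda>ws. \<Sum>\<sigma>\<in>{\<sigma>. \<sigma> permutes {..<m}}. of_int (sign \<sigma>) * rename \<sigma> G ws)"

text \<open>f \<otimes> t_1 \<otimes> ... \<otimes> t_r for monomials t_1,...,t_r (given as the list T)\<close>
definition tensor_monos :: "'a::zero tpoly \<Rightarrow> nat list list \<Rightarrow> 'a tpoly" where
  "tensor_monos f T = (\<lambda>ws. if length T \<le> length ws \<and> drop (length ws - length T) ws = T
                             then f (take (length ws - length T) ws) else 0)"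

definition Phi :: "nat \<Rightarrow> nat \<Rightarrow> 'a::comm_ring_1 tpoly \<Rightarrow> 'a tpoly" where
  "Phi m k f = Alt m (tensor_monos f (map (\<lambda>i. [i]) [k..<m]))"

definition word_eval :: "(nat \<Rightarrow> 'a::comm_ring_1^'d^'d) \<Rightarrow> nat list \<Rightarrow> 'a^'d^'d" where
  "word_eval A w = foldr (\<lambda>i M. A i ** M) w (mat 1)"

text \<open>Evaluation of a tensor polynomial on matrices, as an element of
  M_d(F)^{(x)n}, represented by its coordinates w.r.t. the basis of tensor products of
  matrix units: coordinate at [(i_1,j_1),...,(i_n,j_n)].\<close>
definition teval :: "(nat \<Rightarrow> 'a::comm_ring_1^'d^'d) \<Rightarrow> 'a tpoly \<Rightarrow> ('d \<times> 'd) list \<Rightarrow> 'a" where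
  "teval A f = (\<lambda>ij. \<Sum>ws\<in>tsupp f. f ws *
      (if length ws = length ij
       then prod_list (map2 (\<lambda>w (i, j). word_eval A w $ i $ j) ws ij) else 0))"

end

theory Submission
  imports Defs
begin


definition PP :: "(nat \<Rightarrow> 'a::comm_ring_1^'d^'d) \<Rightarrow> nat list list \<Rightarrow> ('d \<times> 'd) list \<Rightarrow> 'a" where
  "PP A ws ij = (if length ws = length ij
       then prod_list (map2 (\<lambda>w (i, j). word_eval A w $ i $ j) ws ij) else 0)"

lemma teval_PP: "teval A f ij = (\<Sum>ws\<in>tsupp f. f ws * PP A ws ij)"
  unfolding teval_def PP_def by simp

lemma teval_alt:
  assumes "finite S" "tsupp f \<subseteq> S"
  shows "teval A f ij = (\<Sum>ws\<in>S. f ws * PP A ws ij)"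
  unfolding teval_PP
  by (rule sum.mono_neutral_left) (use assms in \<open>auto simp: tsupp_def\<close>)

lemma teval_sum:
  assumes "finite I" "\<And>s. s \<in> I \<Longrightarrow> finite (tsupp (g s))"
  shows "teval A (\<lambda>ws. \<Sum>s\<in>I. c s * g s ws) ij = (\<Sum>s\<in>I. c s * teval A (g s) ij)"
proof -
  define S where "S = (\<Union>s\<in>I. tsupp (g s))"
  have fS: "finite S" using assms unfolding S_def by auto
  have "tsupp (\<lambda>ws. \<Sum>s\<in>I. c s * g s ws) \<subseteq> S"
    unfolding S_def tsupp_def by (auto intro: ccontr)
  hence "teval A (\<lambda>ws. \<Sum>s\<in>I. c s * g s ws) ij = (\<Sum>ws\<in>S. (\<Sum>s\<in>I. c s * g s ws) * PP A ws ij)"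
    using teval_alt fS by blast
  also have "\<dots> = (\<Sum>s\<in>I. c s * (\<Sum>ws\<in>S. g s ws * PP A ws ij))"
    by (simp add: sum_distrib_right sum_distrib_left mult.assoc) (rule sum.swap)
  also have "\<dots> = (\<Sum>s\<in>I. c s * teval A (g s) ij)"
    by (rule sum.cong[OF refl], subst teval_alt[OF fS]) (auto simp: S_def tsupp_def)
  finally show ?thesis .
qed

lemma teval_scale:
  assumes "finite (tsupp g)"
  shows "teval A (\<lambda>ws. c * g ws) ij = c * teval A g ij"
  using teval_sum[of "{()}" "\<lambda>_. g" A "\<lambda>_. c" ij] assms by simp

lemma word_eval_cong: "(\<And>i. i \<in> set w \<Longrightarrow> A i = B i) \<Longrightarrow> word_eval A w = word_eval B w"
  unfolding word_eval_def by (induction w) auto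

lemma word_eval_map: "word_eval A (map \<sigma> w) = word_eval (A \<circ> \<sigma>) w"
  unfolding word_eval_def by (induction w) auto

lemma PP_map: "PP A (map (map \<sigma>) ws) ij = PP (A \<circ> \<sigma>) ws ij"
proof -
  have "map2 (\<lambda>w (i, j). word_eval A w $ i $ j) (map (map \<sigma>) ws) ij =
        map2 (\<lambda>w (i, j). word_eval (A \<circ> \<sigma>) w $ i $ j) ws ij"
  proof (induction ws arbitrary: ij)
    case (Cons w ws) thus ?case by (cases ij) (auto simp: word_eval_map o_def)
  qed simp
  thus ?thesis unfolding PP_def by simp
qed

lemma PP_cong: assumes "\<And>w i. w \<in> set ws \<Longrightarrow> i \<in> set w \<Longrightarrow> A i = B i"
  shows "PP A ws ij = PP B ws ij"
proof -
  have e: "\<forall>w\<in>set ws. word_eval A w = word_eval B w" using word_eval_cong assms by metis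
  have h: "map2 (\<lambda>w (i, j). word_eval A w $ i $ j) ws ij = map2 (\<lambda>w (i, j). word_eval B w $ i $ j) ws ij"
    by (rule map_cong[OF refl]) (use e in \<open>auto dest!: set_zip_leftD\<close>)
  show ?thesis unfolding PP_def h by (rule refl)
qed

lemma teval_cong:
  assumes "vars_in V f" "\<And>i. i \<in> V \<Longrightarrow> A i = B i"
  shows "teval A f = teval B f"
proof
  fix ij show "teval A f ij = teval B f ij"
    unfolding teval_PP
    by (rule sum.cong[OF refl], rule arg_cong[where f="\<lambda>x. _ * x"], rule PP_cong)
       (use assms in \<open>auto simp: vars_in_def\<close>)
qed

lemma tsupp_rename: assumes "bij \<sigma>" shows "tsupp (rename \<sigma> G) = map (map \<sigma>) ` tsupp G"
proof -
  have inv: "inv \<sigma> (\<sigma> x) = x" "\<sigma> (inv \<sigma> x) = x" for x using assms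
    by (auto simp: bij_def surj_f_inv_f)
  have io: "inv \<sigma> \<circ> \<sigma> = id" using inv by auto
  have m1: "map (map (inv \<sigma>)) (map (map \<sigma>) ws) = ws" for ws by (simp add: io)
  have m2: "map (map \<sigma>) (map (map (inv \<sigma>)) ws) = ws" for ws by (simp add: inv map_idI)
  show ?thesis unfolding tsupp_def rename_def
    by (auto simp: m1 io image_iff) (metis m2)
qed

lemma teval_rename:
  assumes "bij \<sigma>" "finite (tsupp G)"
  shows "teval B (rename \<sigma> G) ij = teval (B \<circ> \<sigma>) G ij"
proof -
  have inv: "inv \<sigma> (\<sigma> x) = x" for x using assms
    by (auto simp: bij_def)
  have io: "inv \<sigma> \<circ> \<sigma> = id" using inv by auto
  have m1: "map (map (inv \<sigma>)) (map (map \<sigma>) ws) = ws" for ws by (simp add: io)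
  have inj: "inj (map (map \<sigma>))" using assms by (simp add: bij_def inj_mapI)
  show ?thesis unfolding teval_PP tsupp_rename[OF assms(1)]
    by (subst sum.reindex) (auto intro: inj_on_subset[OF inj] simp: rename_def m1 io PP_map)
qed



lemma tsupp_tm: "tsupp (tensor_monos f T) = (\<lambda>u. u @ T) ` tsupp f"
proof -
  have "ws \<in> (\<lambda>u. u @ T) ` tsupp f" if "ws \<in> tsupp (tensor_monos f T)" for ws
  proof -
    let ?u = "take (length ws - length T) ws"
    from that have h: "length T \<le> length ws" "drop (length ws - length T) ws = T" "f ?u \<noteq> 0"
      unfolding tsupp_def tensor_monos_def by (auto split: if_splits)
    have "ws = ?u @ T" using h(2) by (metis append_take_drop_id)
    thus ?thesis using h(3) unfolding tsupp_def by blast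
  qed
  moreover have "u @ T \<in> tsupp (tensor_monos f T)" if "u \<in> tsupp f" for u
    using that unfolding tsupp_def tensor_monos_def by simp
  ultimately show ?thesis by blast
qed

lemma tm_app: "tensor_monos f T (u @ T) = f u"
  unfolding tensor_monos_def by simp

lemma finite_tsupp_tm: "finite (tsupp f) \<Longrightarrow> finite (tsupp (tensor_monos f T))"
  by (simp add: tsupp_tm)

lemma teval_tm:
  assumes "finite (tsupp f)" "length tl0 = length T"
  shows "teval A (tensor_monos f T) (ij0 @ tl0) =
     teval A f ij0 * prod_list (map2 (\<lambda>w (i,j). word_eval A w $ i $ j) T tl0)"
proof -
  have inj: "inj_on (\<lambda>u. u @ T) X" for X by (auto simp: inj_on_def)
  have pp: "PP A (u @ T) (ij0 @ tl0) = PP A u ij0 * prod_list (map2 (\<lambda>w (i,j). word_eval A w $ i $ j) T tl0)" for u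
    using assms(2) unfolding PP_def by auto
  show ?thesis unfolding teval_PP tsupp_tm
    by (subst sum.reindex[OF inj]) (simp add: tm_app pp sum_distrib_right mult.assoc)
qed

lemma teval_tm_short:
  assumes "length ij < length T"
  shows "teval A (tensor_monos f T) ij = 0"
  unfolding teval_PP tsupp_tm using assms
  by (intro sum.neutral) (auto simp: PP_def)

definition lin_form :: "('a::comm_ring_1^'d^'d \<Rightarrow> 'a) \<Rightarrow> bool" where
  "lin_form F \<longleftrightarrow> (\<exists>C. \<forall>X. F X = (\<Sum>a\<in>UNIV. \<Sum>b\<in>UNIV. C a b * X$a$b))"

lemma lin_form_zero: "lin_form (\<lambda>X. 0)"
  unfolding lin_form_def by (rule exI[of _ "\<lambda>_ _. 0"]) simp

lemma lin_form_add: assumes "lin_form F" "lin_form G" shows "lin_form (\<lambda>X. F X + G X)"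
proof -
  obtain C where C: "\<And>X. F X = (\<Sum>a\<in>UNIV. \<Sum>b\<in>UNIV. C a b * X$a$b)" using assms unfolding lin_form_def by blast
  obtain D where D: "\<And>X. G X = (\<Sum>a\<in>UNIV. \<Sum>b\<in>UNIV. D a b * X$a$b)" using assms unfolding lin_form_def by blast
  show ?thesis unfolding lin_form_def
    by (rule exI[of _ "\<lambda>a b. C a b + D a b"]) (simp add: C D distrib_right sum.distrib)
qed

lemma lin_form_scale: assumes "lin_form F" shows "lin_form (\<lambda>X. c * F X)"
proof -
  obtain C where C: "\<And>X. F X = (\<Sum>a\<in>UNIV. \<Sum>b\<in>UNIV. C a b * X$a$b)" using assms unfolding lin_form_def by blast
  show ?thesis unfolding lin_form_def
    by (rule exI[of _ "\<lambda>a b. c * C a b"]) (simp add: C sum_distrib_left mult.assoc)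
qed

lemma lin_form_scale2: "lin_form F \<Longrightarrow> lin_form (\<lambda>X. F X * c)"
  using lin_form_scale[of F c] by (simp add: mult.commute)

lemma lin_form_sum: "finite S \<Longrightarrow> (\<And>s. s \<in> S \<Longrightarrow> lin_form (F s)) \<Longrightarrow> lin_form (\<lambda>X. \<Sum>s\<in>S. F s X)"
  by (induction S rule: finite_induct) (auto intro: lin_form_zero lin_form_add)

lemma lin_form_entry: "lin_form (\<lambda>X. (L ** X ** R) $ p $ q)"
proof -
  have "(L ** X ** R) $ p $ q = (\<Sum>a\<in>UNIV. \<Sum>b\<in>UNIV. (L$p$a * R$b$q) * X$a$b)" for X
    by (simp add: matrix_matrix_mult_def sum_distrib_right sum_distrib_left mult_ac)
       (rule sum.swap)
  thus ?thesis unfolding lin_form_def by (intro exI[of _ "\<lambda>a b. L$p$a * R$b$q"]) simp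
qed

lemma word_eval_Cons[simp]: "word_eval A (i # w) = A i ** word_eval A w"
  unfolding word_eval_def by simp

lemma word_eval_one:
  "count_list w j = 1 \<Longrightarrow> \<exists>L R. \<forall>X. word_eval (A(j:=X)) w = L ** X ** R"
proof (induction w)
  case Nil thus ?case by simp
next
  case (Cons i w)
  show ?case
  proof (cases "i = j")
    case True
    hence "count_list w j = 0" using Cons.prems by simp
    hence "j \<notin> set w" by (simp add: count_list_0_iff)
    hence e: "word_eval (A(j:=X)) w = word_eval A w" for X by (intro word_eval_cong) auto
    have "word_eval (A(j:=X)) (i # w) = mat 1 ** X ** word_eval A w" for X
      using True by (simp only: word_eval_Cons e fun_upd_same matrix_mul_lid)
    thus ?thesis by blast
  next
    case False
    hence "count_list w j = 1" using Cons.prems by simp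
    then obtain L R where LR: "\<forall>X. word_eval (A(j:=X)) w = L ** X ** R" using Cons.IH by blast
    have "word_eval (A(j:=X)) (i # w) = (A i ** L) ** X ** R" for X
    proof -
      have "(A(j:=X)) i = A i" using False by simp
      thus ?thesis using LR by (simp only: word_eval_Cons matrix_mul_assoc)
    qed
    thus ?thesis by blast
  qed
qed

lemma prod_lin:
  assumes "count_list (concat ws) j = 1" "length ws = length ij"
  shows "lin_form (\<lambda>X. prod_list (map2 (\<lambda>w (r, s). word_eval (A(j:=X)) w $ r $ s) ws ij))"
  using assms
proof (induction ws arbitrary: ij)
  case Nil thus ?case by simp
next
  case (Cons w ws)
  then obtain p q ij' where ij: "ij = (p,q) # ij'" "length ws = length ij'"
    by (cases ij) auto
  have const: "j \<notin> set u \<Longrightarrow> word_eval (A(j:=X)) u = word_eval A u" for u X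
    by (intro word_eval_cong) auto
  show ?case
  proof (cases "count_list w j = 0")
    case True
    hence "count_list (concat ws) j = 1" using Cons.prems by simp
    from Cons.IH[OF this ij(2)] have "lin_form (\<lambda>X. word_eval A w $ p $ q *
        prod_list (map2 (\<lambda>w (r, s). word_eval (A(j:=X)) w $ r $ s) ws ij'))"
      by (rule lin_form_scale)
    moreover have "j \<notin> set w" using True by (simp add: count_list_0_iff)
    ultimately show ?thesis by (simp add: ij const del: fun_upd_apply)
  next
    case False
    hence c1: "count_list w j = 1" and c0: "count_list (concat ws) j = 0" using Cons.prems by auto
    from c0 have "\<forall>u\<in>set ws. j \<notin> set u" by (simp add: count_list_0_iff)
    hence rest: "map2 (\<lambda>w (r, s). word_eval (A(j:=X)) w $ r $ s) ws ij' =
                 map2 (\<lambda>w (r, s). word_eval A w $ r $ s) ws ij'" for X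
      by (intro map_cong[OF refl]) (auto dest!: set_zip_leftD simp: const)
    obtain L R where LR: "\<forall>X. word_eval (A(j:=X)) w = L ** X ** R" using word_eval_one[OF c1] by blast
    show ?thesis unfolding ij
      by (simp add: rest LR del: fun_upd_apply) (intro lin_form_scale2 lin_form_entry)
  qed
qed

lemma teval_lin:
  assumes "finite (tsupp f)" "multilinear_in k f" "j < k"
  shows "lin_form (\<lambda>X. teval (A(j:=X)) f ij)"
  unfolding teval_PP
proof (rule lin_form_sum[OF assms(1)])
  fix ws assume ws: "ws \<in> tsupp f"
  hence c: "count_list (concat ws) j = 1" using assms unfolding multilinear_in_def by blast
  show "lin_form (\<lambda>X. f ws * PP (A(j:=X)) ws ij)"
  proof (cases "length ws = length ij")
    case True
    show ?thesis unfolding PP_def using lin_form_scale[OF prod_lin[OF c True], of "f ws" A] True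
      by simp
  qed (simp add: PP_def lin_form_zero)
qed

definition EE :: "'d \<times> 'd \<Rightarrow> 'a::comm_ring_1^'d^'d" where
  "EE pq = (\<chi> r s. if (r, s) = pq then 1 else 0)"

lemma lin_form_basis:
  assumes "lin_form F" "F X \<noteq> 0"
  shows "\<exists>pq. F (EE pq) \<noteq> 0"
proof -
  obtain C where C: "\<And>X. F X = (\<Sum>a\<in>UNIV. \<Sum>b\<in>UNIV. C a b * X$a$b)" using assms unfolding lin_form_def by blast
  have "\<exists>a b. C a b \<noteq> 0"
  proof (rule ccontr)
    assume "\<not> ?thesis" thus False using assms(2) C by simp
  qed
  then obtain a b where ab: "C a b \<noteq> 0" by blast
  have inner: "(\<Sum>bb\<in>UNIV. if aa = a \<and> bb = b then C a b else 0) = (if aa = a then C a b else 0)" for aa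
    by (cases "aa = a") simp_all
  have "F (EE (a,b)) = C a b" unfolding C EE_def
    by (simp add: if_distrib inner cong: if_cong)
  thus ?thesis using ab by (intro exI[of _ "(a,b)"]) simp
qed



lemma basis_reduce:
  assumes "finite (tsupp f)" "multilinear_in k f" "j \<le> k" "teval A f ij \<noteq> 0"
  shows "\<exists>A'. (\<forall>i<j. \<exists>pq. A' i = EE pq) \<and> teval A' f ij \<noteq> 0"
  using assms(3)
proof (induction j)
  case 0 thus ?case using assms(4) by blast
next
  case (Suc j)
  then obtain A' where A': "\<forall>i<j. \<exists>pq. A' i = EE pq" "teval A' f ij \<noteq> 0" by auto
  have jk: "j < k" using Suc.prems by simp
  have lf: "lin_form (\<lambda>X. teval (A'(j:=X)) f ij)" using teval_lin[OF assms(1,2) jk] .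
  have "teval (A'(j := A' j)) f ij \<noteq> 0" using A'(2) by simp
  from lin_form_basis[OF lf this] obtain pq0 where pq: "teval (A'(j := EE pq0)) f ij \<noteq> 0" by blast
  have "\<exists>pq. (A'(j := EE pq0)) i = EE pq" if "i < Suc j" for i
  proof (cases "i = j")
    case True thus ?thesis by (cases pq0) auto
  next
    case False thus ?thesis using A'(1) that by simp
  qed
  thus ?case using pq by blast
qed

lemma distinct_zero:
  fixes f :: "'a::field_char_0 tpoly"
  assumes "finite (tsupp f)" "antisym_in k f" "i < k" "i' < k" "i \<noteq> i'" "A i = A i'"
  shows "teval A f ij = 0"
proof -
  let ?t = "Transposition.transpose i i'"
  have p: "?t permutes {..<k}" using assms by (intro permutes_swap_id) auto
  have r: "rename ?t f = (\<lambda>ws. of_int (sign ?t) * f ws)" using assms(2) p unfolding antisym_in_def by blast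
  have s: "sign ?t = -1" using assms(5) by (simp add: sign_swap_id)
  have at: "A \<circ> ?t = A" using assms(6) by (auto simp: fun_eq_iff Transposition.transpose_def)
  have "teval A (rename ?t f) ij = teval (A \<circ> ?t) f ij"
    by (rule teval_rename[OF permutes_bij[OF p] assms(1)])
  hence "teval A f ij = teval A (rename ?t f) ij" by (simp only: at)
  also have "\<dots> = - teval A f ij" unfolding r teval_scale[OF assms(1)] s by simp
  finally show ?thesis by (metis add_eq_0_iff2 mult_2 mult_eq_0_iff zero_neq_numeral)
qed

lemma map2_map_map: "map2 h (map f xs) (map g xs) = map (\<lambda>x. h (f x) (g x)) xs"
  by (induction xs) auto

lemma Phi_sum:
  assumes "finite (tsupp f)"
  shows "teval B (Phi m k f) ij = (\<Sum>\<sigma>\<in>{\<sigma>. \<sigma> permutes {..<m}}. of_int (sign \<sigma>) *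
      teval (B \<circ> \<sigma>) (tensor_monos f (map (\<lambda>i. [i]) [k..<m])) ij)"
proof -
  let ?G = "tensor_monos f (map (\<lambda>i. [i]) [k..<m])"
  have fG: "finite (tsupp ?G)" using finite_tsupp_tm[OF assms] .
  have fr: "finite (tsupp (rename \<sigma> ?G))" if "\<sigma> permutes {..<m}" for \<sigma>
    using fG permutes_bij[OF that] by (simp add: tsupp_rename)
  show ?thesis unfolding Phi_def Alt_def
    by (subst teval_sum) (auto simp: finite_permutations fr teval_rename[OF permutes_bij fG])
qed

lemma backward:
  fixes f :: "'a::field_char_0 tpoly" and B :: "nat \<Rightarrow> 'a^'d^'d"
  assumes "finite (tsupp f)" "\<forall>A :: nat \<Rightarrow> 'a^'d^'d. teval A f = (\<lambda>_. 0)"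
  shows "teval B (Phi m k f) ij = 0"
proof -
  let ?T = "map (\<lambda>i. [i]) [k..<m]"
  have "teval C (tensor_monos f ?T) ij = 0" for C
  proof (cases "length ij < length ?T")
    case True thus ?thesis by (rule teval_tm_short)
  next
    case False
    let ?l = "length ij - length ?T"
    have "teval C (tensor_monos f ?T) (take ?l ij @ drop ?l ij) = 0"
      using False assms by (subst teval_tm) (auto simp: fun_eq_iff)
    thus ?thesis by simp
  qed
  thus ?thesis unfolding Phi_sum[OF assms(1)] by simp
qed



lemma forward:
  fixes f :: "'a::field_char_0 tpoly" and A :: "nat \<Rightarrow> 'a^'d^'d"
  assumes km: "k \<le> CARD('d::finite)^2" and fin: "finite (tsupp f)" and vars: "vars_in {..<k} f"
    and ml: "multilinear_in k f" and anti: "antisym_in k f" and nz: "teval A f ij0 \<noteq> 0"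
  shows "\<exists>B :: nat \<Rightarrow> 'a^'d^'d. teval B (Phi (CARD('d)^2) k f) \<noteq> (\<lambda>_. 0)"
proof -
  define m where "m = CARD('d)^2"
  have km': "k \<le> m" using km unfolding m_def .
  obtain A' :: "nat \<Rightarrow> 'a^'d^'d" where A': "\<forall>i<k. \<exists>pq. A' i = EE pq" "teval A' f ij0 \<noteq> 0"
    using basis_reduce[OF fin ml le_refl nz] by blast
  define c where "c i = (SOME pq. A' i = EE pq)" for i
  have Ac: "A' i = EE (c i)" if "i < k" for i
    using A'(1) that unfolding c_def by (metis (mono_tags) someI_ex)
  have injc: "inj_on c {..<k}"
  proof (rule inj_onI)
    fix i i' assume h: "i \<in> {..<k}" "i' \<in> {..<k}" "c i = c i'"
    show "i = i'"
    proof (rule ccontr)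
      assume "i \<noteq> i'"
      moreover have "A' i = A' i'" using h Ac by simp
      ultimately have "teval A' f ij0 = 0" using distinct_zero[OF fin anti, of i i' A' ij0] h by auto
      thus False using A'(2) by simp
    qed
  qed
  have cardU: "card (UNIV :: ('d \<times> 'd) set) = m"
    unfolding m_def UNIV_Times_UNIV[symmetric] card_cartesian_product by (simp add: power2_eq_square)
  have "card (UNIV - c ` {..<k}) = m - k"
    by (subst card_Diff_subset) (auto simp: cardU card_image[OF injc] m_def power2_eq_square)
  hence "card {k..<m} \<le> card (UNIV - c ` {..<k})" by simp
  then obtain \<gamma> where \<gamma>: "\<gamma> ` {k..<m} \<subseteq> UNIV - c ` {..<k}" "inj_on \<gamma> {k..<m}"
    using card_le_inj[OF finite_atLeastLessThan finite] by blast
  define \<beta> where "\<beta> i = (if i < k then c i else \<gamma> i)" for i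
  have injb: "inj_on \<beta> {..<m}"
  proof (rule inj_onI)
    fix x y assume h: "x \<in> {..<m}" "y \<in> {..<m}" "\<beta> x = \<beta> y"
    show "x = y"
    proof (cases "x < k"; cases "y < k")
      assume "x < k" "y < k" thus ?thesis using h injc unfolding \<beta>_def by (auto dest: inj_onD)
    next
      assume "\<not> x < k" "\<not> y < k" thus ?thesis using h \<gamma>(2) unfolding \<beta>_def by (auto dest: inj_onD)
    next
      assume a: "x < k" "\<not> y < k"
      hence "y \<in> {k..<m}" using h by auto
      hence "\<gamma> y \<notin> c ` {..<k}" using \<gamma>(1) by blast
      thus ?thesis using a h unfolding \<beta>_def by (auto simp: image_iff) (metis lessThan_iff)
    next
      assume a: "\<not> x < k" "y < k"
      hence "x \<in> {k..<m}" using h by auto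
      hence "\<gamma> x \<notin> c ` {..<k}" using \<gamma>(1) by blast
      thus ?thesis using a h unfolding \<beta>_def by auto
    qed
  qed
  define B :: "nat \<Rightarrow> 'a^'d^'d" where "B i = (if i < m then EE (\<beta> i) else A' i)" for i
  have Bf: "teval B f = teval A' f"
    by (rule teval_cong[OF vars]) (use km' in \<open>auto simp: B_def \<beta>_def Ac\<close>)
  define T where "T = map (\<lambda>i. [i]) [k..<m]"
  define tl0 where "tl0 = map \<beta> [k..<m]"
  have lenT: "length tl0 = length T" unfolding T_def tl0_def by simp
  have prodfix: "prod_list (map2 (\<lambda>w (r, s). word_eval (B \<circ> \<sigma>) w $ r $ s) T tl0)
      = (if \<sigma> permutes {..<k} then 1 else 0)" if \<sigma>: "\<sigma> permutes {..<m}" for \<sigma>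
  proof -
    define g where "g t = (if \<beta> (\<sigma> t) = \<beta> t then 1 else (0::'a))" for t
    have "map2 (\<lambda>w (r, s). word_eval (B \<circ> \<sigma>) w $ r $ s) T tl0 = map g [k..<m]"
      unfolding T_def tl0_def map2_map_map
    proof (rule map_cong[OF refl])
      fix t assume "t \<in> set [k..<m]"
      hence "\<sigma> t < m" using permutes_in_image[OF \<sigma>, of t] by auto
      thus "(case \<beta> t of (r, s) \<Rightarrow> word_eval (B \<circ> \<sigma>) [t] $ r $ s) = g t"
        unfolding g_def word_eval_def by (auto simp: B_def EE_def split: prod.split)
    qed
    hence e: "prod_list (map2 (\<lambda>w (r, s). word_eval (B \<circ> \<sigma>) w $ r $ s) T tl0) = prod g {k..<m}"
      by (simp add: prod.distinct_set_conv_list[symmetric])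
    show ?thesis
    proof (cases "\<sigma> permutes {..<k}")
      case True
      have "g t = 1" if "t \<in> {k..<m}" for t using permutes_not_in[OF True, of t] that by (simp add: g_def)
      thus ?thesis using True e by simp
    next
      case False
      have "\<exists>t\<in>{k..<m}. \<sigma> t \<noteq> t"
      proof (rule ccontr)
        assume "\<not> ?thesis"
        hence "\<sigma> permutes {..<k}" by (intro permutes_superset[OF \<sigma>]) auto
        thus False using False by simp
      qed
      then obtain t where t: "t \<in> {k..<m}" "\<sigma> t \<noteq> t" by blast
      have "\<sigma> t < m" using permutes_in_image[OF \<sigma>, of t] t by auto
      hence "\<beta> (\<sigma> t) \<noteq> \<beta> t" using t injb by (auto dest: inj_onD)
      hence "g t = 0" by (simp add: g_def)
      thus ?thesis using False e t by (auto simp: prod_zero_iff)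
    qed
  qed
  have main: "teval B (Phi m k f) (ij0 @ tl0) = of_nat (fact k) * teval A' f ij0"
  proof -
    have "teval B (Phi m k f) (ij0 @ tl0) = (\<Sum>\<sigma>\<in>{\<sigma>. \<sigma> permutes {..<m}}. of_int (sign \<sigma>) *
       teval (B \<circ> \<sigma>) (tensor_monos f T) (ij0 @ tl0))"
      using Phi_sum[OF fin] unfolding T_def .
    also have "\<dots> = (\<Sum>\<sigma>\<in>{\<sigma>. \<sigma> permutes {..<m}}. if \<sigma> \<in> {\<sigma>. \<sigma> permutes {..<k}} then teval A' f ij0 else 0)"
    proof (rule sum.cong[OF refl])
      fix \<sigma> assume "\<sigma> \<in> {\<sigma>. \<sigma> permutes {..<m}}"
      hence \<sigma>: "\<sigma> permutes {..<m}" by simp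
      have "teval (B \<circ> \<sigma>) (tensor_monos f T) (ij0 @ tl0) =
        teval (B \<circ> \<sigma>) f ij0 * (if \<sigma> permutes {..<k} then 1 else 0)"
        using teval_tm[OF fin lenT] prodfix[OF \<sigma>] by simp
      moreover have "of_int (sign \<sigma>) * teval (B \<circ> \<sigma>) f ij0 = teval A' f ij0" if p: "\<sigma> permutes {..<k}"
      proof -
        have "teval (B \<circ> \<sigma>) f ij0 = teval B (rename \<sigma> f) ij0"
          using teval_rename[OF permutes_bij[OF p] fin, of B ij0] by simp
        also have "\<dots> = of_int (sign \<sigma>) * teval B f ij0"
          using anti p unfolding antisym_in_def by (simp add: teval_scale[OF fin])
        finally have "of_int (sign \<sigma>) * teval (B \<circ> \<sigma>) f ij0 = (of_int (sign \<sigma> * sign \<sigma>)) * teval B f ij0"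
          by (metis mult.assoc of_int_mult)
        also have "sign \<sigma> * sign \<sigma> = 1" by (simp add: sign_def)
        finally show ?thesis by (simp add: Bf o_def)
      qed
      ultimately show "of_int (sign \<sigma>) * teval (B \<circ> \<sigma>) (tensor_monos f T) (ij0 @ tl0) =
         (if \<sigma> \<in> {\<sigma>. \<sigma> permutes {..<k}} then teval A' f ij0 else 0)" by auto
    qed
    also have "\<dots> = (\<Sum>\<sigma>\<in>{\<sigma>. \<sigma> permutes {..<m}} \<inter> {\<sigma>. \<sigma> permutes {..<k}}. teval A' f ij0)"
      by (rule sum.inter_restrict[symmetric]) (simp add: finite_permutations)
    also have "{\<sigma>. \<sigma> permutes {..<m}} \<inter> {\<sigma>. \<sigma> permutes {..<k}} = {\<sigma>. \<sigma> permutes {..<k}}"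
      using km' by (auto intro: permutes_subset)
    also have "(\<Sum>\<sigma>\<in>{\<sigma>. \<sigma> permutes {..<k}}. teval A' f ij0) = of_nat (fact k) * teval A' f ij0"
      by (simp add: card_permutations)
    finally show ?thesis .
  qed
  have "of_nat (fact k) * teval A' f ij0 \<noteq> (0::'a)" using A'(2) by simp
  hence "teval B (Phi m k f) (ij0 @ tl0) \<noteq> 0" using main by simp
  hence "teval B (Phi m k f) \<noteq> (\<lambda>_. 0)" by (auto simp: fun_eq_iff)
  thus ?thesis unfolding m_def by blast
qed


theorem mainTheorem8:
  fixes f :: "'a::field_char_0 tpoly" and n k :: nat
  assumes "k \<le> CARD('d::finite)^2"
    and "is_tpoly n f"
    and "vars_in {..<k} f"
    and "multilinear_in k f"
    and "antisym_in k f"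
  shows "(\<exists>A :: nat \<Rightarrow> 'a^'d^'d. teval A f \<noteq> (\<lambda>_. 0))
     \<longleftrightarrow> (\<exists>A :: nat \<Rightarrow> 'a^'d^'d. teval A (Phi (CARD('d)^2) k f) \<noteq> (\<lambda>_. 0))"
proof -
  have fin: "finite (tsupp f)" using assms(2) unfolding is_tpoly_def by blast
  show ?thesis
  proof
    assume "\<exists>A :: nat \<Rightarrow> 'a^'d^'d. teval A f \<noteq> (\<lambda>_. 0)"
    then obtain A :: "nat \<Rightarrow> 'a^'d^'d" and ij0 where "teval A f ij0 \<noteq> 0" by (auto simp: fun_eq_iff)
    from forward[OF assms(1) fin assms(3,4,5) this] show "\<exists>A :: nat \<Rightarrow> 'a^'d^'d. teval A (Phi (CARD('d)^2) k f) \<noteq> (\<lambda>_. 0)" .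
  next
    assume h: "\<exists>A :: nat \<Rightarrow> 'a^'d^'d. teval A (Phi (CARD('d)^2) k f) \<noteq> (\<lambda>_. 0)"
    show "\<exists>A :: nat \<Rightarrow> 'a^'d^'d. teval A f \<noteq> (\<lambda>_. 0)"
    proof (rule ccontr)
      assume "\<not> ?thesis"
      hence "\<forall>A :: nat \<Rightarrow> 'a^'d^'d. teval A f = (\<lambda>_. 0)" by blast
      from backward[OF fin this] h show False by (auto simp: fun_eq_iff)
    qed
  qed
qed

end
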